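(* Let $\Gamma$ be a digraph on a set $\Omega$ and let $\mathbf{a}=(\alpha_0,\alpha_1,\ldots)$ be an infinite walk in $\Gamma$ such that every vertex occurs only finitely many times in $\mathbf{a}$. Then there is a ray $\mathbf{r}$ in $\Gamma$ whose vertex sequence is a subsequence of $\mathbf{a}$ such that, for every infinite subset $\Sigma\subseteq\{\alpha_0,\alpha_1,\ldots\}$, we have both $\mathbf{r}\preccurlyeq\Sigma$ and $\Sigma\preccurlyeq\mathbf{r}$. Analogously, if $\mathbf{a}$ is an infinite anti-walk in which every vertex occurs only finitely many times, then $\mathbf{a}$ contains (as a subsequence) an anti-ray $\mathbf{r}$ with $\mathbf{r}\preccurlyeq\Sigma$ and $\Sigma\preccurlyeq\mathbf{r}$ for every infinite subset $\Sigma$ of the vertices of $\mathbf{a}$.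
   Context: A digraph on a set $\Omega$ is a subset $\Gamma\subseteq\Omega\times\Omega$; elements of $\Omega$ are vertices and elements of $\Gamma$ are edges. A walk is a finite or infinite sequence $(v_0,v_1,\ldots)$ of (not necessarily distinct) vertices with $(v_i,v_{i+1})\in\Gamma$ for all $i$; an anti-walk is such a sequence with $(v_{i+1},v_i)\in\Gamma$ for all $i$. A path is a walk consisting of pairwise distinct vertices (a single vertex is a path of length $0$). A ray is an infinite path; an anti-ray is an infinite anti-walk of pairwise distinct vertices. For infinite subsets $\Sigma',\Sigma\subseteq\Omega$ (rays and anti-rays are identified with their vertex sets), write $\Sigma'\preccurlyeq\Sigma$ if there exist infinitely many pairwise vertex-disjoint paths in $\Gamma$ (paths of length $0$ allowed), each with initial vertex in $\Sigma'$ and final vertex in $\Sigma$. *)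

theory Defs
  imports Main
begin

definition is_walk :: "('a \<times> 'a) set \<Rightarrow> (nat \<Rightarrow> 'a) \<Rightarrow> bool" where
  "is_walk \<Gamma> a \<longleftrightarrow> (\<forall>i. (a i, a (Suc i)) \<in> \<Gamma>)"

definition is_anti_walk :: "('a \<times> 'a) set \<Rightarrow> (nat \<Rightarrow> 'a) \<Rightarrow> bool" where
  "is_anti_walk \<Gamma> a \<longleftrightarrow> (\<forall>i. (a (Suc i), a i) \<in> \<Gamma>)"

definition is_ray :: "('a \<times> 'a) set \<Rightarrow> (nat \<Rightarrow> 'a) \<Rightarrow> bool" where
  "is_ray \<Gamma> r \<longleftrightarrow> is_walk \<Gamma> r \<and> inj r"

definition is_anti_ray :: "('a \<times> 'a) set \<Rightarrow> (nat \<Rightarrow> 'a) \<Rightarrow> bool" where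
  "is_anti_ray \<Gamma> r \<longleftrightarrow> is_anti_walk \<Gamma> r \<and> inj r"

definition is_path :: "('a \<times> 'a) set \<Rightarrow> 'a list \<Rightarrow> bool" where
  "is_path \<Gamma> p \<longleftrightarrow> p \<noteq> [] \<and> distinct p \<and> (\<forall>i. Suc i < length p \<longrightarrow> (p ! i, p ! Suc i) \<in> \<Gamma>)"

text \<open>\<open>S' \<preccurlyeq> S\<close>: infinitely many pairwise vertex-disjoint paths from \<open>S'\<close> to \<open>S\<close>.\<close>
definition reach_preceq :: "('a \<times> 'a) set \<Rightarrow> 'a set \<Rightarrow> 'a set \<Rightarrow> bool" where
  "reach_preceq \<Gamma> S' S \<longleftrightarrow>
     (\<exists>P. infinite P \<and> (\<forall>p\<in>P. is_path \<Gamma> p \<and> hd p \<in> S' \<and> last p \<in> S)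
          \<and> pairwise (\<lambda>p q. set p \<inter> set q = {}) P)"

end

theory Submission
  imports Defs
begin

lemma seg_path:
  fixes a :: "nat \<Rightarrow> 'a" and i j :: nat
  assumes w: "is_walk \<Gamma> a"
  shows "i \<le> j \<Longrightarrow> \<exists>p. is_path \<Gamma> p \<and> hd p = a i \<and> last p = a j \<and> set p \<subseteq> a ` {i..j}"
proof (induction "j - i" arbitrary: i rule: less_induct)
  case less
  show ?case
  proof (cases "a i \<in> a ` {Suc i..j}")
    case True
    then obtain i' where i': "i' \<in> {Suc i..j}" "a i' = a i" by auto
    then have "j - i' < j - i" "i' \<le> j" by auto
    from less.hyps[OF this] obtain p where p: "is_path \<Gamma> p" "hd p = a i'" "last p = a j" "set p \<subseteq> a ` {i'..j}"
      by blast
    have "a ` {i'..j} \<subseteq> a ` {i..j}" using i' by auto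
    then have "set p \<subseteq> a ` {i..j}" using p(4) by (rule_tac order_trans) 
    then show ?thesis using p i' by (intro exI[of _ p]) simp
  next
    case False
    show ?thesis
    proof (cases "i = j")
      case True
      then show ?thesis by (intro exI[of _ "[a i]"]) (simp add: is_path_def)
    next
      case ne: False
      then have "j - Suc i < j - i" "Suc i \<le> j" using less.prems by auto
      from less.hyps[OF this] obtain p where p: "is_path \<Gamma> p" "hd p = a (Suc i)" "last p = a j" "set p \<subseteq> a ` {Suc i..j}"
        by blast
      have pne: "p \<noteq> []" using p(1) by (simp add: is_path_def)
      have ni: "a i \<notin> set p" using p(4) False by blast
      have e: "(a i, a (Suc i)) \<in> \<Gamma>" using w by (simp add: is_walk_def)
      have "is_path \<Gamma> (a i # p)"
        unfolding is_path_def
      proof (intro conjI allI impI)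
        show "distinct (a i # p)" using ni p(1) unfolding is_path_def by simp
        fix k assume k: "Suc k < length (a i # p)"
        show "((a i # p) ! k, (a i # p) ! Suc k) \<in> \<Gamma>"
        proof (cases k)
          case 0 then show ?thesis using e p(2) pne by (simp add: hd_conv_nth)
        next
          case (Suc k') then show ?thesis using k p(1) by (simp add: is_path_def)
        qed
      qed simp
      moreover have "a ` {Suc i..j} \<subseteq> a ` {i..j}" by auto
      moreover have "set (a i # p) \<subseteq> a ` {i..j}" using p(4) less.prems by auto
      moreover have "last (a i # p) = a j" using p(3) pne by simp
      moreover have "hd (a i # p) = a i" by simp
      ultimately show ?thesis by blast
    qed
  qed
qed

lemma bound_exists:
  fixes a :: "nat \<Rightarrow> 'a" and x :: nat
  assumes fin: "\<forall>v. finite {i. a i = v}"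
  shows "\<exists>M>x. \<forall>k\<ge>M. a k \<notin> a ` {0..x}"
proof -
  define S where "S = (\<Union>v\<in>a ` {0..x}. {i. a i = v})"
  have "finite S" unfolding S_def using fin by (intro finite_UN_I) auto
  define M where "M = Suc (Max (S \<union> {x}))"
  have "M > x" unfolding M_def using \<open>finite S\<close> by (simp add: le_imp_less_Suc)
  moreover have "\<forall>k\<ge>M. a k \<notin> a ` {0..x}"
  proof (intro allI impI)
    fix k assume k: "k \<ge> M"
    show "a k \<notin> a ` {0..x}"
    proof
      assume "a k \<in> a ` {0..x}"
      then have "k \<in> S" unfolding S_def by auto
      then have "k \<le> Max (S \<union> {x})" using \<open>finite S\<close> by simp
      then show False using k unfolding M_def by simp
    qed
  qed
  ultimately show ?thesis by blast
qed


lemma walk_reach: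
  fixes a :: "nat \<Rightarrow> 'a"
  assumes w: "is_walk \<Gamma> a" and fin: "\<forall>v. finite {i. a i = v}"
    and A: "\<forall>N. \<exists>i\<ge>N. a i \<in> A" and B: "\<forall>N. \<exists>j\<ge>N. a j \<in> B"
  shows "reach_preceq \<Gamma> A B"
proof -
  have "\<forall>x. \<exists>M>x. \<forall>k\<ge>M. a k \<notin> a ` {0..x}" using bound_exists[OF fin] by blast
  then obtain bnd where bnd: "\<And>x. bnd x > x" "\<And>x k. k \<ge> bnd x \<Longrightarrow> a k \<notin> a ` {0..x}"
    by metis
  have "\<forall>e. \<exists>ij::nat\<times>nat. bnd e \<le> fst ij \<and> fst ij \<le> snd ij \<and> a (fst ij) \<in> A \<and> a (snd ij) \<in> B"
  proof
    fix e
    obtain i where i: "i \<ge> bnd e" "a i \<in> A" using A by blast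
    obtain j where j: "j \<ge> i" "a j \<in> B" using B by blast
    show "\<exists>ij::nat\<times>nat. bnd e \<le> fst ij \<and> fst ij \<le> snd ij \<and> a (fst ij) \<in> A \<and> a (snd ij) \<in> B"
      using i j by (intro exI[of _ "(i,j)"]) simp
  qed
  then obtain nx where nx: "\<And>e. bnd e \<le> fst (nx e)" "\<And>e. fst (nx e) \<le> snd (nx e)"
     "\<And>e. a (fst (nx e)) \<in> A" "\<And>e. a (snd (nx e)) \<in> B"
    by metis
  define sq where "sq = rec_nat (nx 0) (\<lambda>_ s. nx (snd s))"
  have sq0: "sq 0 = nx 0" and sqS: "\<And>n. sq (Suc n) = nx (snd (sq n))" by (simp_all add: sq_def)
  define I where "I n = fst (sq n)" for n
  define J where "J n = snd (sq n)" for n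
  have IJ: "I n \<le> J n" "a (I n) \<in> A" "a (J n) \<in> B" for n
    by (cases n; simp add: I_def J_def sq0 sqS nx)+
  have IS: "I (Suc n) \<ge> bnd (J n)" for n by (simp add: I_def J_def sqS nx)
  have JS: "J n < J (Suc n)" for n using IS[of n] IJ(1)[of "Suc n"] bnd(1)[of "J n"] by linarith
  have Jmono: "m \<le> n \<Longrightarrow> J m \<le> J n" for m n
    using lift_Suc_mono_le[of J, OF less_imp_le[OF JS]] by blast
  have "\<forall>n. \<exists>p. is_path \<Gamma> p \<and> hd p = a (I n) \<and> last p = a (J n) \<and> set p \<subseteq> a ` {I n..J n}"
    using seg_path[OF w IJ(1)] by blast
  then obtain pth where pth: "\<And>n. is_path \<Gamma> (pth n)" "\<And>n. hd (pth n) = a (I n)"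
     "\<And>n. last (pth n) = a (J n)" "\<And>n. set (pth n) \<subseteq> a ` {I n..J n}"
    by metis
  have disj: "set (pth m) \<inter> set (pth n) = {}" if mn: "m < n" for m n
  proof -
    obtain n' where n': "n = Suc n'" using mn by (cases n) auto
    have "J m \<le> J n'" using Jmono mn n' by simp
    then have s1: "set (pth m) \<subseteq> a ` {0..J n'}" using pth(4)[of m] by fastforce
    have s2: "set (pth n) \<inter> a ` {0..J n'} = {}"
    proof -
      { fix v assume v: "v \<in> set (pth n)"
        then obtain k where k: "k \<in> {I n..J n}" "v = a k" using pth(4)[of n] by blast
        then have "k \<ge> bnd (J n')" using IS[of n'] n' by simp
        then have "v \<notin> a ` {0..J n'}" using bnd(2) k(2) by simp }
      then show ?thesis by blast
    qed
    show ?thesis using s1 s2 by blast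
  qed
  have ne: "pth n \<noteq> []" for n using pth(1)[of n] by (simp add: is_path_def)
  have injp: "inj pth"
  proof (rule injI)
    fix m n assume eq: "pth m = pth n"
    show "m = n"
    proof (rule ccontr)
      assume "m \<noteq> n"
      then have "set (pth m) \<inter> set (pth n) = {}" using disj disj[of n m] by (cases "m < n") (auto simp: Int_commute)
      then show False using eq ne[of n] by simp
    qed
  qed
  show ?thesis unfolding reach_preceq_def
  proof (intro exI[of _ "range pth"] conjI)
    show "infinite (range pth)" using injp finite_imageD by blast
    show "\<forall>p\<in>range pth. is_path \<Gamma> p \<and> hd p \<in> A \<and> last p \<in> B" using pth IJ by auto
    show "pairwise (\<lambda>p q. set p \<inter> set q = {}) (range pth)"
      unfolding pairwise_def
    proof (intro ballI impI)
      fix p q assume "p \<in> range pth" "q \<in> range pth" "p \<noteq> q"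
      then obtain m n where "p = pth m" "q = pth n" "m \<noteq> n" by auto
      then show "set p \<inter> set q = {}" using disj disj[of n m]
        by (cases "m < n") (auto simp: Int_commute)
    qed
  qed
qed


lemma unbounded_sub:
  fixes a :: "nat \<Rightarrow> 'a"
  assumes "S \<subseteq> range a" "infinite S"
  shows "\<forall>N. \<exists>i\<ge>N. a i \<in> S"
proof (rule ccontr)
  assume "\<not> (\<forall>N. \<exists>i\<ge>N. a i \<in> S)"
  then obtain N where N: "\<And>i. i \<ge> N \<Longrightarrow> a i \<notin> S" by auto
  have "S \<subseteq> a ` {..<N}"
  proof
    fix s assume s: "s \<in> S"
    then obtain i where i: "s = a i" using assms(1) by auto
    then have "i < N" using N s by (meson not_le)
    then show "s \<in> a ` {..<N}" using i by simp
  qed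
  then have "finite S" using finite_subset by blast
  then show False using assms(2) by simp
qed

lemma walk_main:
  fixes a :: "nat \<Rightarrow> 'a"
  assumes w: "is_walk \<Gamma> a" and fin: "\<forall>v. finite {i. a i = v}"
  shows "\<exists>f r. strict_mono f \<and> r = a \<circ> f \<and> is_ray \<Gamma> r \<and>
               (\<forall>\<Sigma>. \<Sigma> \<subseteq> range a \<and> infinite \<Sigma> \<longrightarrow>
                  reach_preceq \<Gamma> (range r) \<Sigma> \<and> reach_preceq \<Gamma> \<Sigma> (range r))"
proof -
  define lo where "lo i = Max {j. a j = a i}" for i
  have fi: "finite {j. a j = a i}" for i using fin by blast
  have lo1: "i \<le> lo i" for i unfolding lo_def using fi[of i] by (intro Max_ge) auto
  have lo2: "a (lo i) = a i" for i
  proof -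
    have "lo i \<in> {j. a j = a i}" unfolding lo_def using fi[of i] by (intro Max_in) auto
    then show ?thesis by simp
  qed
  have lo3: "j > lo i \<Longrightarrow> a j \<noteq> a i" for i j
  proof
    assume "j > lo i" "a j = a i"
    then have "j \<le> lo i" unfolding lo_def using fi[of i] by (intro Max_ge) auto
    then show False using \<open>j > lo i\<close> by simp
  qed
  define f where "f = rec_nat (lo 0) (\<lambda>_ x. lo (Suc x))"
  have f0: "f 0 = lo 0" and fS: "\<And>k. f (Suc k) = lo (Suc (f k))" by (simp_all add: f_def)
  have fl: "\<exists>x. f k = lo x" for k by (cases k) (auto simp: f0 fS)
  have sm: "strict_mono f"
    unfolding strict_mono_Suc_iff by (metis fS lo1 Suc_le_lessD)
  define r where "r = a \<circ> f"
  have rw: "is_walk \<Gamma> r" unfolding is_walk_def r_def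
  proof
    fix k
    have "(a (f k), a (Suc (f k))) \<in> \<Gamma>" using w by (simp add: is_walk_def)
    then show "((a \<circ> f) k, (a \<circ> f) (Suc k)) \<in> \<Gamma>" by (simp add: fS lo2)
  qed
  have ri: "inj r"
  proof (rule injI)
    fix m n assume eq: "r m = r n"
    have key: "m < n \<Longrightarrow> r m \<noteq> r n" for m n
    proof -
      assume mn: "m < n"
      then have fmn: "f m < f n" using sm by (simp add: strict_mono_less)
      obtain x where x: "f m = lo x" using fl by blast
      have "a (f n) \<noteq> a x" using lo3[of x "f n"] fmn x by simp
      then show "r m \<noteq> r n" unfolding r_def using x lo2[of x] by simp
    qed
    show "m = n" using key[of m n] key[of n m] eq by (cases "m < n"; cases "n < m") auto
  qed
  have ur: "\<forall>N. \<exists>i\<ge>N. a i \<in> range r"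
  proof
    fix N
    have "f N \<ge> N" using sm by (rule strict_mono_imp_increasing)
    then show "\<exists>i\<ge>N. a i \<in> range r" unfolding r_def by (intro exI[of _ "f N"]) auto
  qed
  show ?thesis
  proof (intro exI[of _ f] exI[of _ r] conjI allI impI)
    show "strict_mono f" by (rule sm)
    show "r = a \<circ> f" by (rule r_def)
    show "is_ray \<Gamma> r" using rw ri by (simp add: is_ray_def)
    fix S assume S: "S \<subseteq> range a \<and> infinite S"
    then have uS: "\<forall>N. \<exists>i\<ge>N. a i \<in> S" using unbounded_sub by blast
    show "reach_preceq \<Gamma> (range r) S" by (rule walk_reach[OF w fin ur uS])
    show "reach_preceq \<Gamma> S (range r)" by (rule walk_reach[OF w fin uS ur])
  qed
qed

lemma path_rev:
  assumes "is_path (converse \<Gamma>) p"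
  shows "is_path \<Gamma> (rev p)"
  unfolding is_path_def
proof (intro conjI allI impI)
  show "rev p \<noteq> []" "distinct (rev p)" using assms by (auto simp: is_path_def)
  fix i assume i: "Suc i < length (rev p)"
  define k where "k = length p - Suc (Suc i)"
  have k1: "length p - Suc i = Suc k" using i unfolding k_def by simp
  have "Suc k < length p" using i k1 by simp
  then have "(p ! k, p ! Suc k) \<in> converse \<Gamma>" using assms by (simp add: is_path_def)
  moreover have "rev p ! i = p ! Suc k" using i k1 by (simp add: rev_nth)
  moreover have "rev p ! Suc i = p ! k" using i unfolding k_def by (simp add: rev_nth)
  ultimately show "(rev p ! i, rev p ! Suc i) \<in> \<Gamma>" by simp
qed

lemma reach_conv:
  assumes "reach_preceq (converse \<Gamma>) X Y"
  shows "reach_preceq \<Gamma> Y X"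
proof -
  obtain P where P: "infinite P" "\<forall>p\<in>P. is_path (converse \<Gamma>) p \<and> hd p \<in> X \<and> last p \<in> Y"
    "pairwise (\<lambda>p q. set p \<inter> set q = {}) P"
    using assms unfolding reach_preceq_def by blast
  show ?thesis unfolding reach_preceq_def
  proof (intro exI[of _ "rev ` P"] conjI)
    show "infinite (rev ` P)" using P(1) finite_imageD[of rev P] inj_on_rev by blast
    show "\<forall>p\<in>rev ` P. is_path \<Gamma> p \<and> hd p \<in> Y \<and> last p \<in> X"
    proof
      fix p assume "p \<in> rev ` P"
      then obtain q where q: "q \<in> P" "p = rev q" by auto
      then have ne: "q \<noteq> []" using P(2) by (auto simp: is_path_def)
      show "is_path \<Gamma> p \<and> hd p \<in> Y \<and> last p \<in> X"
        using q P(2) path_rev ne by (auto simp: hd_rev last_rev)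
    qed
    show "pairwise (\<lambda>p q. set p \<inter> set q = {}) (rev ` P)"
      using P(3) unfolding pairwise_def by auto
  qed
qed

theorem mainTheorem1:
  fixes \<Gamma> :: "('a \<times> 'a) set" and \<Omega> :: "'a set"
  assumes "\<Gamma> \<subseteq> \<Omega> \<times> \<Omega>"
  shows "(\<forall>a :: nat \<Rightarrow> 'a. is_walk \<Gamma> a \<and> (\<forall>v. finite {i. a i = v}) \<longrightarrow>
            (\<exists>f r. strict_mono f \<and> r = a \<circ> f \<and> is_ray \<Gamma> r \<and>
               (\<forall>\<Sigma>. \<Sigma> \<subseteq> range a \<and> infinite \<Sigma> \<longrightarrow>
                  reach_preceq \<Gamma> (range r) \<Sigma> \<and> reach_preceq \<Gamma> \<Sigma> (range r))))
       \<and> (\<forall>a :: nat \<Rightarrow> 'a. is_anti_walk \<Gamma> a \<and> (\<forall>v. finite {i. a i = v}) \<longrightarrow>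
            (\<exists>f r. strict_mono f \<and> r = a \<circ> f \<and> is_anti_ray \<Gamma> r \<and>
               (\<forall>\<Sigma>. \<Sigma> \<subseteq> range a \<and> infinite \<Sigma> \<longrightarrow>
                  reach_preceq \<Gamma> (range r) \<Sigma> \<and> reach_preceq \<Gamma> \<Sigma> (range r))))"
proof (intro conjI allI impI)
  fix a :: "nat \<Rightarrow> 'a"
  assume "is_walk \<Gamma> a \<and> (\<forall>v. finite {i. a i = v})"
  then show "\<exists>f r. strict_mono f \<and> r = a \<circ> f \<and> is_ray \<Gamma> r \<and>
               (\<forall>\<Sigma>. \<Sigma> \<subseteq> range a \<and> infinite \<Sigma> \<longrightarrow>
                  reach_preceq \<Gamma> (range r) \<Sigma> \<and> reach_preceq \<Gamma> \<Sigma> (range r))"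
    using walk_main by blast
next
  fix a :: "nat \<Rightarrow> 'a"
  assume h: "is_anti_walk \<Gamma> a \<and> (\<forall>v. finite {i. a i = v})"
  then have "is_walk (converse \<Gamma>) a" by (simp add: is_walk_def is_anti_walk_def)
  from walk_main[OF this] h obtain f r where fr: "strict_mono f" "r = a \<circ> f" "is_ray (converse \<Gamma>) r"
    "\<forall>\<Sigma>. \<Sigma> \<subseteq> range a \<and> infinite \<Sigma> \<longrightarrow>
         reach_preceq (converse \<Gamma>) (range r) \<Sigma> \<and> reach_preceq (converse \<Gamma>) \<Sigma> (range r)"
    by blast
  show "\<exists>f r. strict_mono f \<and> r = a \<circ> f \<and> is_anti_ray \<Gamma> r \<and>
               (\<forall>\<Sigma>. \<Sigma> \<subseteq> range a \<and> infinite \<Sigma> \<longrightarrow>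
                  reach_preceq \<Gamma> (range r) \<Sigma> \<and> reach_preceq \<Gamma> \<Sigma> (range r))"
  proof (intro exI[of _ f] exI[of _ r] conjI allI impI)
    show "strict_mono f" "r = a \<circ> f" using fr by auto
    show "is_anti_ray \<Gamma> r" using fr(3) by (simp add: is_ray_def is_anti_ray_def is_walk_def is_anti_walk_def)
    fix S assume "S \<subseteq> range a \<and> infinite S"
    then show "reach_preceq \<Gamma> (range r) S" "reach_preceq \<Gamma> S (range r)"
      using fr(4) reach_conv by blast+
  qed
qed

end
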